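(* Fix $n\ge1$ and $\mathbf a_n=(a_1,\dots,a_n)\in\mathcal A_n$. The function $F_{\mathbf a_n}:\bar\nabla\to\mathbb R$ is continuous on $\bar\nabla$ (with the subspace topology of $\mathbb R^\infty$) if and only if $a_1=0$.
   Context: $\bar\nabla=\{(p_1,p_2,\dots):p_1\ge p_2\ge\dots\ge0,\ \sum_k p_k\le1\}$ with the subspace topology of the product space $\mathbb R^\infty$. $\mathcal A_n=\{(a_1,\dots,a_n):a_k\in\mathbb Z_{\ge0},\ \sum_{i=1}^n ia_i=n\}$. For $\mathbf p\in\bar\nabla$, $$F_{\mathbf a_n}(\mathbf p)=C(n,\mathbf a_n)\sum\prod_{i=1}^n\prod_{j=1}^{a_i}p_{l_{ij}}^{\,i},\qquad C(n,\mathbf a_n)=\frac{n!}{\prod_{j=1}^n (j!)^{a_j}a_j!},$$ where the sum is over all families of positive integers $l_{ij}$ ($1\le i\le n$, $1\le j\le a_i$) that are pairwise distinct and satisfy $l_{i1}<\dots<l_{ia_i}$ for each $i$ (this is the probability of sample configuration $\mathbf a_n$ given allele frequencies $\mathbf p$, extended directly to $\bar\nabla$). *)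

theory Defs
  imports "HOL-Analysis.Analysis"
begin

text \<open>Sequences (p_1, p_2, ...) are represented as p :: nat => real, re-indexed from 0
  (p 0 stands for p_1). The type nat => real carries the product topology
  (HOL-Analysis Function_Topology), i.e. the topology of R^infinity.\<close>

definition nabla_bar :: "(nat \<Rightarrow> real) set" where
  "nabla_bar = {p. (\<forall>k. p k \<ge> p (Suc k)) \<and> (\<forall>k. p k \<ge> 0) \<and> summable p \<and> suminf p \<le> 1}"

definition idx :: "nat \<Rightarrow> (nat \<Rightarrow> nat) \<Rightarrow> (nat \<times> nat) set" where
  "idx n a = {(i, j). 1 \<le> i \<and> i \<le> n \<and> 1 \<le> j \<and> j \<le> a i}"

definition labelings :: "nat \<Rightarrow> (nat \<Rightarrow> nat) \<Rightarrow> (nat \<times> nat \<Rightarrow> nat) set" where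
  "labelings n a = {l. l \<in> idx n a \<rightarrow>\<^sub>E (UNIV :: nat set) \<and> inj_on l (idx n a) \<and>
      (\<forall>i j. (i, j) \<in> idx n a \<and> (i, Suc j) \<in> idx n a \<longrightarrow> l (i, j) < l (i, Suc j))}"

definition Ccoef :: "nat \<Rightarrow> (nat \<Rightarrow> nat) \<Rightarrow> real" where
  "Ccoef n a = fact n / (\<Prod>j=1..n. (fact j) ^ (a j) * fact (a j))"

definition F :: "nat \<Rightarrow> (nat \<Rightarrow> nat) \<Rightarrow> (nat \<Rightarrow> real) \<Rightarrow> real" where
  "F n a p = Ccoef n a *
     infsum (\<lambda>l. \<Prod>(i, j)\<in>idx n a. p (l (i, j)) ^ i) (labelings n a)"

end

theory Submission
  imports Defs
begin

lemma prod_case_eq: "(\<Prod>(i, j)\<in>A. p (l (i, j)) ^ i) = (\<Prod>x\<in>A. (p::nat\<Rightarrow>real) (l x) ^ fst x)"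
  by (rule prod.cong) auto

lemma idx_Sigma: "idx n a = Sigma {1..n} (\<lambda>i. {1..a i})"
  by (auto simp: idx_def)

lemma idx_finite: "finite (idx n a)"
  by (simp add: idx_Sigma)

lemma idx_fst: "x \<in> idx n a \<Longrightarrow> 1 \<le> fst x"
  by (auto simp: idx_def)

lemma lab_PiE: "labelings n a \<subseteq> PiE (idx n a) (\<lambda>_. UNIV)"
  by (auto simp: labelings_def)

lemma coord_cont [continuous_intros]: "continuous_on S (\<lambda>p::nat\<Rightarrow>real. p k)"
  by (rule continuous_on_subset[OF continuous_on_product_coordinates]) simp

lemma nb_nonneg: "p \<in> nabla_bar \<Longrightarrow> 0 \<le> p k"
  by (auto simp: nabla_bar_def)

lemma nb_summable: "p \<in> nabla_bar \<Longrightarrow> summable p"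
  by (auto simp: nabla_bar_def)

lemma nb_sum_le: "p \<in> nabla_bar \<Longrightarrow> finite A \<Longrightarrow> sum p A \<le> 1"
proof -
  assume p: "p \<in> nabla_bar" and A: "finite A"
  have "sum p A \<le> suminf p"
    using p A by (intro sum_le_suminf) (auto simp: nabla_bar_def)
  also have "\<dots> \<le> 1" using p by (auto simp: nabla_bar_def)
  finally show ?thesis .
qed

lemma nb_le1: "p \<in> nabla_bar \<Longrightarrow> p k \<le> 1"
  using nb_sum_le[of p "{k}"] by simp

lemma nb_decr: "p \<in> nabla_bar \<Longrightarrow> k \<le> k' \<Longrightarrow> p k' \<le> p k"
  by (rule lift_Suc_antimono_le[of p]) (auto simp: nabla_bar_def)

lemma nb_tail: "p \<in> nabla_bar \<Longrightarrow> p N \<le> 1 / real (Suc N)"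
proof -
  assume p: "p \<in> nabla_bar"
  have "(\<Sum>k<Suc N. p N) \<le> (\<Sum>k<Suc N. p k)"
    by (intro sum_mono nb_decr[OF p]) auto
  also have "(\<Sum>k<Suc N. p k) \<le> 1" by (rule nb_sum_le[OF p]) simp
  finally have "(\<Sum>k<Suc N. p N) \<le> 1" .
  hence "real (Suc N) * p N \<le> 1" by (simp only: sum_constant card_lessThan)
  thus ?thesis by (simp add: field_simps)
qed

lemma nb_pow_sum_le: "p \<in> nabla_bar \<Longrightarrow> finite A \<Longrightarrow> 1 \<le> i \<Longrightarrow> (\<Sum>k\<in>A. p k ^ i) \<le> 1"
proof -
  assume p: "p \<in> nabla_bar" and A: "finite A" and i: "1 \<le> i"
  have "(\<Sum>k\<in>A. p k ^ i) \<le> (\<Sum>k\<in>A. p k)"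
    using power_decreasing[OF i nb_nonneg[OF p] nb_le1[OF p]] by (intro sum_mono) simp
  also have "\<dots> \<le> 1" using nb_sum_le[OF p A] .
  finally show ?thesis .
qed

lemma finite_bound:
  fixes p :: "nat \<Rightarrow> real"
  assumes "\<And>k. 0 \<le> p k" "finite I" "S \<subseteq> PiE I B" "\<And>x. x \<in> I \<Longrightarrow> finite (B x)"
  shows "(\<Sum>l\<in>S. \<Prod>x\<in>I. p (l x) ^ e x) \<le> (\<Prod>x\<in>I. \<Sum>k\<in>B x. p k ^ e x)"
proof -
  have fin: "finite (PiE I B)" using assms by (intro finite_PiE) auto
  have "(\<Sum>l\<in>S. \<Prod>x\<in>I. p (l x) ^ e x) \<le> (\<Sum>l\<in>PiE I B. \<Prod>x\<in>I. p (l x) ^ e x)"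
    using assms fin by (intro sum_mono2) (auto intro!: prod_nonneg)
  also have "\<dots> = (\<Prod>x\<in>I. \<Sum>k\<in>B x. p k ^ e x)"
    using assms by (subst prod_sum_PiE) auto
  finally show ?thesis .
qed

lemma finite_lab_bound:
  assumes "finite S" "S \<subseteq> labelings n a"
  obtains M where "S \<subseteq> PiE (idx n a) (\<lambda>_. {..<M})"
proof -
  define M where "M = Suc (Max (\<Union>l\<in>S. l ` idx n a))"
  have fin: "finite (\<Union>l\<in>S. l ` idx n a)" using assms idx_finite by auto
  have "S \<subseteq> PiE (idx n a) (\<lambda>_. {..<M})"
  proof
    fix l assume l: "l \<in> S"
    hence "l \<in> PiE (idx n a) (\<lambda>_. UNIV)" using assms lab_PiE by blast
    moreover have "l x < M" if "x \<in> idx n a" for x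
    proof -
      have "l x \<in> (\<Union>l\<in>S. l ` idx n a)" using l that by blast
      hence "l x \<le> Max (\<Union>l\<in>S. l ` idx n a)" using Max_ge[OF fin] by blast
      thus ?thesis by (simp add: M_def)
    qed
    ultimately show "l \<in> PiE (idx n a) (\<lambda>_. {..<M})" by (auto simp: PiE_iff)
  qed
  thus ?thesis using that by blast
qed

lemma lab_summable:
  assumes p: "p \<in> nabla_bar"
  shows "(\<lambda>l. \<Prod>x\<in>idx n a. p (l x) ^ fst x) summable_on labelings n a"
proof (rule nonneg_bdd_above_summable_on)
  show "\<And>l. l \<in> labelings n a \<Longrightarrow> 0 \<le> (\<Prod>x\<in>idx n a. p (l x) ^ fst x)"
    using nb_nonneg[OF p] by (auto intro!: prod_nonneg)
  show "bdd_above (sum (\<lambda>l. \<Prod>x\<in>idx n a. p (l x) ^ fst x) ` {F. F \<subseteq> labelings n a \<and> finite F})"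
  proof (rule bdd_aboveI2)
    fix S assume S: "S \<in> {F. F \<subseteq> labelings n a \<and> finite F}"
    then obtain M where M: "S \<subseteq> PiE (idx n a) (\<lambda>_. {..<M})"
      using finite_lab_bound by blast
    have "(\<Sum>l\<in>S. \<Prod>x\<in>idx n a. p (l x) ^ fst x) \<le> (\<Prod>x\<in>idx n a. \<Sum>k\<in>{..<M}. p k ^ fst x)"
      by (rule finite_bound[OF nb_nonneg[OF p] idx_finite M]) auto
    also have "\<dots> \<le> 1"
      by (intro prod_le_1 conjI sum_nonneg nb_pow_sum_le[OF p] idx_fst zero_le_power nb_nonneg[OF p]) auto
    finally show "(\<Sum>l\<in>S. \<Prod>x\<in>idx n a. p (l x) ^ fst x) \<le> 1" .
  qed
qed

lemma tail_bound:
  assumes p: "p \<in> nabla_bar" and a1: "a 1 = 0"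
  shows "infsum (\<lambda>l. \<Prod>x\<in>idx n a. p (l x) ^ fst x) (labelings n a - {l\<in>labelings n a. \<forall>x\<in>idx n a. l x < N})
     \<le> real (card (idx n a)) / real (Suc N)"
proof -
  let ?I = "idx n a"
  define g where "g = (\<lambda>l. \<Prod>x\<in>?I. p (l x) ^ fst x)"
  have "infsum g (labelings n a - {l\<in>labelings n a. \<forall>x\<in>?I. l x < N}) \<le> real (card ?I) / real (Suc N)"
  proof (rule infsum_le_finite_sums)
    show "g summable_on (labelings n a - {l\<in>labelings n a. \<forall>x\<in>?I. l x < N})"
      using lab_summable[OF p] summable_on_subset_banach unfolding g_def by blast
    fix S assume S: "finite S" "S \<subseteq> labelings n a - {l\<in>labelings n a. \<forall>x\<in>?I. l x < N}"
    obtain M where M: "S \<subseteq> PiE ?I (\<lambda>_. {..<M})" using finite_lab_bound[of S n a] S by blast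
    have i2: "2 \<le> fst x" if xI: "x \<in> ?I" for x
    proof -
      obtain i j where ij: "x = (i, j)" "1 \<le> i" "1 \<le> j" "j \<le> a i" using xI unfolding idx_def by blast
      show ?thesis by (cases "i = 1") (use a1 ij in auto)
    qed
    have gnn: "0 \<le> g l" for l using nb_nonneg[OF p] by (auto simp: g_def intro!: prod_nonneg)
    have "sum g S \<le> (\<Sum>l\<in>S. \<Sum>x\<in>?I. if N \<le> l x then g l else 0)"
    proof (rule sum_mono)
      fix l assume l: "l \<in> S"
      then obtain x0 where x0: "x0 \<in> ?I" "N \<le> l x0" using S by force
      have "g l = (if N \<le> l x0 then g l else 0)" using x0 by simp
      also have "\<dots> \<le> (\<Sum>x\<in>?I. if N \<le> l x then g l else 0)"
        by (rule member_le_sum) (use x0 gnn idx_finite in auto)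
      finally show "g l \<le> (\<Sum>x\<in>?I. if N \<le> l x then g l else 0)" .
    qed
    also have "\<dots> = (\<Sum>x\<in>?I. \<Sum>l\<in>S. if N \<le> l x then g l else 0)" by (rule sum.swap)
    also have "\<dots> \<le> (\<Sum>x\<in>?I. 1 / real (Suc N))"
    proof (rule sum_mono)
      fix x assume x: "x \<in> ?I"
      define B where "B y = (if y = x then {N..<M} else {..<M})" for y
      have "(\<Sum>l\<in>S. if N \<le> l x then g l else 0) = sum g {l\<in>S. N \<le> l x}"
        using S by (simp add: sum.inter_filter)
      also have "\<dots> \<le> (\<Prod>y\<in>?I. \<Sum>k\<in>B y. p k ^ fst y)"
        unfolding g_def
      proof (rule finite_bound[OF nb_nonneg[OF p] idx_finite])
        show "{l\<in>S. N \<le> l x} \<subseteq> PiE ?I B"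
        proof
          fix l assume l: "l \<in> {l\<in>S. N \<le> l x}"
          hence "l \<in> PiE ?I (\<lambda>_. {..<M})" using M by blast
          thus "l \<in> PiE ?I B" using l by (auto simp: B_def PiE_iff)
        qed
      qed (auto simp: B_def)
      also have "\<dots> = (\<Sum>k\<in>B x. p k ^ fst x) * (\<Prod>y\<in>?I-{x}. \<Sum>k\<in>B y. p k ^ fst y)"
        using x idx_finite by (simp add: prod.remove)
      also have "\<dots> \<le> (1 / real (Suc N)) * 1"
      proof (rule mult_mono)
        show "(\<Prod>y\<in>?I-{x}. \<Sum>k\<in>B y. p k ^ fst y) \<le> 1"
          by (intro prod_le_1 conjI sum_nonneg nb_pow_sum_le[OF p] zero_le_power nb_nonneg[OF p])
             (auto simp: B_def dest: idx_fst)
        have "(\<Sum>k\<in>B x. p k ^ fst x) = (\<Sum>k\<in>{N..<M}. p k ^ fst x)" by (simp add: B_def)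
        also have "\<dots> \<le> (\<Sum>k\<in>{N..<M}. p k * p N)"
        proof (rule sum_mono)
          fix k assume k: "k \<in> {N..<M}"
          have "p k ^ fst x \<le> p k ^ 2"
            using power_decreasing[OF i2[OF x] nb_nonneg[OF p] nb_le1[OF p]] .
          also have "\<dots> = p k * p k" by (simp add: power2_eq_square)
          also have "\<dots> \<le> p k * p N" using k by (intro mult_left_mono nb_decr[OF p] nb_nonneg[OF p]) auto
          finally show "p k ^ fst x \<le> p k * p N" .
        qed
        also have "\<dots> = (\<Sum>k\<in>{N..<M}. p k) * p N" by (simp add: sum_distrib_right)
        also have "\<dots> \<le> 1 * p N" by (intro mult_right_mono nb_sum_le[OF p] nb_nonneg[OF p]) auto
        also have "\<dots> \<le> 1 / real (Suc N)" using nb_tail[OF p] by simp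
        finally show "(\<Sum>k\<in>B x. p k ^ fst x) \<le> 1 / real (Suc N)" .
      qed (auto intro!: prod_nonneg sum_nonneg zero_le_power nb_nonneg[OF p])
      finally show "(\<Sum>l\<in>S. if N \<le> l x then g l else 0) \<le> 1 / real (Suc N)" by simp
    qed
    also have "\<dots> = real (card ?I) / real (Suc N)" by simp
    finally show "sum g S \<le> real (card ?I) / real (Suc N)" .
  qed
  thus ?thesis by (simp add: g_def)
qed

lemma cont_part:
  assumes a1: "a 1 = 0"
  shows "continuous_on nabla_bar (F n a)"
proof -
  let ?I = "idx n a" let ?L = "labelings n a"
  define g where "g p l = (\<Prod>x\<in>?I. p (l x) ^ fst x)" for p :: "nat \<Rightarrow> real" and l
  define LN where "LN N = {l\<in>?L. \<forall>x\<in>?I. l x < N}" for N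
  define FN where "FN N p = Ccoef n a * sum (g p) (LN N)" for N p
  have gp: "g p = (\<lambda>l. \<Prod>x\<in>?I. p (l x) ^ fst x)" for p by (simp add: g_def fun_eq_iff)
  have Feq: "F n a p = Ccoef n a * infsum (g p) ?L" for p
    by (simp add: F_def prod_case_eq gp)
  have finLN: "finite (LN N)" for N
  proof -
    have "LN N \<subseteq> PiE ?I (\<lambda>_. {..<N})" using lab_PiE by (auto simp: LN_def PiE_iff)
    moreover have "finite (PiE ?I (\<lambda>_. {..<N}))" by (intro finite_PiE idx_finite) simp
    ultimately show ?thesis by (rule finite_subset)
  qed
  have Cnn: "0 \<le> Ccoef n a" by (auto simp: Ccoef_def intro!: divide_nonneg_nonneg prod_nonneg)
  have bound: "\<bar>F n a p - FN N p\<bar> \<le> Ccoef n a * (real (card ?I) / real (Suc N))"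
    if p: "p \<in> nabla_bar" for p N
  proof -
    have s: "g p summable_on ?L" using lab_summable[OF p] by (simp add: gp)
    have s1: "g p summable_on LN N" by (rule summable_on_subset_banach[OF s]) (auto simp: LN_def)
    have s2: "g p summable_on (?L - LN N)" by (rule summable_on_subset_banach[OF s]) auto
    have "?L = LN N \<union> (?L - LN N)" by (auto simp: LN_def)
    hence "infsum (g p) ?L = infsum (g p) (LN N \<union> (?L - LN N))" by simp
    also have "\<dots> = infsum (g p) (LN N) + infsum (g p) (?L - LN N)"
      by (rule infsum_Un_disjoint[OF s1 s2]) auto
    also have "infsum (g p) (LN N) = sum (g p) (LN N)" using finLN by simp
    finally have eq: "F n a p - FN N p = Ccoef n a * infsum (g p) (?L - LN N)"
      by (simp add: Feq FN_def algebra_simps)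
    have nn: "0 \<le> infsum (g p) (?L - LN N)"
      by (intro infsum_nonneg) (auto simp: g_def intro!: prod_nonneg zero_le_power nb_nonneg[OF p])
    have le: "infsum (g p) (?L - LN N) \<le> real (card ?I) / real (Suc N)"
      using tail_bound[of p a n N, OF p a1] by (simp add: gp LN_def)
    have "\<bar>F n a p - FN N p\<bar> = Ccoef n a * infsum (g p) (?L - LN N)" using eq nn Cnn by simp
    also have "\<dots> \<le> Ccoef n a * (real (card ?I) / real (Suc N))" by (rule mult_left_mono[OF le Cnn])
    finally show ?thesis .
  qed
  have cN: "continuous_on nabla_bar (FN N)" for N
    unfolding FN_def g_def by (intro continuous_intros)
  have ul: "uniform_limit nabla_bar FN (F n a) sequentially"
    unfolding uniform_limit_iff
  proof (intro allI impI)
    fix e :: real assume e: "0 < e"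
    obtain N0 :: nat where N0: "Ccoef n a * real (card ?I) / e < real N0"
      using reals_Archimedean2 by blast
    show "\<forall>\<^sub>F N in sequentially. \<forall>p\<in>nabla_bar. dist (FN N p) (F n a p) < e"
    proof (rule eventually_sequentiallyI[of N0])
      fix N assume N: "N0 \<le> N"
      have "Ccoef n a * real (card ?I) < e * real N0" using N0 e by (simp add: field_simps)
      also have "\<dots> \<le> e * real (Suc N)" using N e by simp
      finally have lt: "Ccoef n a * (real (card ?I) / real (Suc N)) < e" by (simp add: field_simps)
      show "\<forall>p\<in>nabla_bar. dist (FN N p) (F n a p) < e"
      proof
        fix p assume p: "p \<in> nabla_bar"
        have "dist (FN N p) (F n a p) = \<bar>F n a p - FN N p\<bar>" by (simp add: dist_real_def abs_minus_commute)
        also have "\<dots> < e" using bound[OF p, of N] lt by linarith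
        finally show "dist (FN N p) (F n a p) < e" .
      qed
    qed
  qed
  show ?thesis by (rule uniform_limit_theorem[OF _ ul]) (auto simp: cN)
qed

definition Sa :: "(nat \<Rightarrow> nat) \<Rightarrow> nat \<Rightarrow> nat" where "Sa a i = (\<Sum>i'\<in>{2..<i}. a i')"
definition phi :: "(nat \<Rightarrow> nat) \<Rightarrow> nat \<times> nat \<Rightarrow> nat" where "phi a x = Sa a (fst x) + (snd x - 1)"
definition labf :: "nat \<Rightarrow> (nat \<Rightarrow> nat) \<Rightarrow> nat \<Rightarrow> (nat \<Rightarrow> nat) \<Rightarrow> nat \<times> nat \<Rightarrow> nat" where
  "labf n a M t = restrict (\<lambda>x. if fst x = 1 then Sa a (Suc n) + (snd x - 1) * M + t (snd x) else phi a x) (idx n a)"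

lemma Sa_Suc: "2 \<le> i \<Longrightarrow> Sa a (Suc i) = Sa a i + a i"
  by (simp add: Sa_def)

lemma Sa_mono: "i \<le> i' \<Longrightarrow> Sa a i \<le> Sa a i'"
  unfolding Sa_def by (intro sum_mono2) auto

lemma phi_lt: "x \<in> idx n a \<Longrightarrow> 2 \<le> fst x \<Longrightarrow> phi a x < Sa a (Suc (fst x))"
  by (auto simp: idx_def phi_def Sa_Suc)

lemma phi_lt_r: "x \<in> idx n a \<Longrightarrow> 2 \<le> fst x \<Longrightarrow> phi a x < Sa a (Suc n)"
  using phi_lt[of x n a] Sa_mono[of "Suc (fst x)" "Suc n" a] by (auto simp: idx_def)

lemma phi_inj:
  assumes "x \<in> idx n a" "y \<in> idx n a" "2 \<le> fst x" "2 \<le> fst y" "phi a x = phi a y"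
  shows "x = y"
proof -
  have lt: False if "u \<in> idx n a" "v \<in> idx n a" "2 \<le> fst u" "fst u < fst v" "phi a u = phi a v" for u v
  proof -
    have "phi a u < Sa a (Suc (fst u))" using phi_lt that by blast
    also have "\<dots> \<le> Sa a (fst v)" using that by (intro Sa_mono) auto
    also have "\<dots> \<le> phi a v" by (simp add: phi_def)
    finally show False using that by simp
  qed
  have "fst x = fst y" using lt[of x y] lt[of y x] assms by (cases "fst x < fst y"; cases "fst y < fst x") auto
  moreover have "snd x = snd y" using assms calculation by (auto simp: phi_def idx_def)
  ultimately show ?thesis by (simp add: prod_eq_iff)
qed

lemma divmod_inj:
  fixes b b' M :: nat
  assumes "b < M" "b' < M" "c * M + b = c' * M + b'"
  shows "c = c' \<and> b = b'"
proof -
  have M0: "M \<noteq> 0" using assms by auto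
  have d: "(c'' * M + b'') div M = c''" if "b'' < M" for c'' b'' :: nat
  proof -
    have "(b'' + c'' * M) div M = c'' + b'' div M" using M0 by (rule div_mult_self1)
    thus ?thesis using that by (simp add: add.commute)
  qed
  have "c = (c * M + b) div M" by (rule d[OF assms(1), symmetric])
  also have "\<dots> = (c' * M + b') div M" using assms(3) by simp
  also have "\<dots> = c'" by (rule d[OF assms(2)])
  finally have "c = c'" .
  thus ?thesis using assms by simp
qed

lemma labf_val1:
  assumes "x \<in> idx n a" "fst x = 1"
  shows "labf n a M t x = Sa a (Suc n) + (snd x - 1) * M + t (snd x)"
  using assms by (simp add: labf_def)

lemma labf_val2:
  assumes "x \<in> idx n a" "fst x \<noteq> 1"
  shows "labf n a M t x = phi a x"
  using assms by (simp add: labf_def)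

lemma idx_fst2: "x \<in> idx n a \<Longrightarrow> fst x \<noteq> 1 \<Longrightarrow> 2 \<le> fst x"
  by (auto simp: idx_def)

lemma labf_in:
  assumes t: "t \<in> PiE {1..a 1} (\<lambda>_. {..<M})"
  shows "labf n a M t \<in> labelings n a"
proof -
  let ?I = "idx n a" let ?r = "Sa a (Suc n)" let ?l = "labf n a M t"
  have tl: "t j < M" if "j \<in> {1..a 1}" for j using t that by auto
  have v1: "?l x = ?r + (snd x - 1) * M + t (snd x)" "snd x \<in> {1..a 1}" if "x \<in> ?I" "fst x = 1" for x
    using that labf_val1 by (auto simp: idx_def)
  have inj: "inj_on ?l ?I"
  proof (rule inj_onI)
    fix x y assume x: "x \<in> ?I" and y: "y \<in> ?I" and e: "?l x = ?l y"
    show "x = y"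
    proof (cases "fst x = 1")
      case True note x1 = this
      show ?thesis
      proof (cases "fst y = 1")
        case True
        have "(snd x - 1) * M + t (snd x) = (snd y - 1) * M + t (snd y)"
          using e v1[OF x x1] v1[OF y True] by simp
        hence "snd x - 1 = snd y - 1" using divmod_inj tl v1(2)[OF x x1] v1(2)[OF y True] by blast
        hence "snd x = snd y" using x y by (auto simp: idx_def)
        thus ?thesis using x1 True by (simp add: prod_eq_iff)
      next
        case False
        have "?l y < ?r" using labf_val2[OF y False] phi_lt_r[OF y idx_fst2[OF y False]] by simp
        moreover have "?r \<le> ?l x" using v1[OF x x1] by simp
        ultimately show ?thesis using e by simp
      qed
    next
      case False note x2 = this
      show ?thesis
      proof (cases "fst y = 1")
        case True
        have "?l x < ?r" using labf_val2[OF x x2] phi_lt_r[OF x idx_fst2[OF x x2]] by simp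
        moreover have "?r \<le> ?l y" using v1[OF y True] by simp
        ultimately show ?thesis using e by simp
      next
        case False
        show ?thesis
          using phi_inj[OF x y idx_fst2[OF x x2] idx_fst2[OF y False]] e labf_val2[OF x x2] labf_val2[OF y False]
          by simp
      qed
    qed
  qed
  have incr: "?l (i, j) < ?l (i, Suc j)" if "(i, j) \<in> ?I" "(i, Suc j) \<in> ?I" for i j
  proof (cases "i = 1")
    case True
    have j: "1 \<le> j" "j \<in> {1..a 1}" using that True by (auto simp: idx_def)
    have "(j - 1) * M + t j < (j - 1) * M + M" using tl[OF j(2)] by simp
    also have "\<dots> = (Suc j - 1) * M" using j by (cases j) auto
    finally show ?thesis using v1[OF that(1)] v1[OF that(2)] True by simp
  next
    case False
    thus ?thesis using labf_val2[OF that(1)] labf_val2[OF that(2)] that by (auto simp: phi_def idx_def)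
  qed
  show ?thesis unfolding labelings_def
    using inj incr by (auto simp: labf_def)
qed

lemma labf_inj: "inj_on (labf n a M) (PiE {1..a 1} (\<lambda>_. {..<M}))" if "1 \<le> n"
proof (rule inj_onI)
  fix t t' assume t: "t \<in> PiE {1..a 1} (\<lambda>_. {..<M})" and t': "t' \<in> PiE {1..a 1} (\<lambda>_. {..<M})"
    and e: "labf n a M t = labf n a M t'"
  show "t = t'"
  proof (rule PiE_ext[OF t t'])
    fix j assume j: "j \<in> {1..a 1}"
    have xI: "(1, j) \<in> idx n a" using j that by (auto simp: idx_def)
    have "labf n a M t (1, j) = labf n a M t' (1, j)" using e by simp
    thus "t j = t' j" using labf_val1[OF xI] by simp
  qed
qed


definition cc :: "nat \<Rightarrow> (nat \<Rightarrow> nat) \<Rightarrow> real" where "cc n a = 1 / (real (Sa a (Suc n)) + 1)"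

definition qq :: "nat \<Rightarrow> (nat \<Rightarrow> nat) \<Rightarrow> nat \<Rightarrow> nat \<Rightarrow> real" where
  "qq n a M k = (if k < Sa a (Suc n) then cc n a
     else if k < Sa a (Suc n) + a 1 * M then cc n a / (real (a 1) * real M) else 0)"

definition ps :: "nat \<Rightarrow> (nat \<Rightarrow> nat) \<Rightarrow> nat \<Rightarrow> real" where
  "ps n a k = (if k < Sa a (Suc n) then cc n a else 0)"

lemma cc_pos: "0 < cc n a" by (simp add: cc_def)

lemma nb_intro:
  fixes p :: "nat \<Rightarrow> real"
  assumes "\<And>k. p (Suc k) \<le> p k" "\<And>k. 0 \<le> p k" "\<And>k. R \<le> k \<Longrightarrow> p k = 0" "sum p {..<R} \<le> 1"
  shows "p \<in> nabla_bar"
proof -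
  have "p sums sum p {..<R}" by (rule sums_finite) (use assms(3) in auto)
  thus ?thesis using assms unfolding nabla_bar_def by (auto simp: sums_iff)
qed

lemma ps_nb: "ps n a \<in> nabla_bar"
proof (rule nb_intro[where R = "Sa a (Suc n)"])
  show "sum (ps n a) {..<Sa a (Suc n)} \<le> 1"
  proof -
    have "sum (ps n a) {..<Sa a (Suc n)} = real (Sa a (Suc n)) * cc n a" by (simp add: ps_def)
    also have "\<dots> \<le> 1" by (simp add: cc_def field_simps)
    finally show ?thesis .
  qed
qed (use cc_pos[of n a] in \<open>auto simp: ps_def less_imp_le\<close>)

lemma qq_nb:
  assumes K: "1 \<le> a 1" and M: "1 \<le> M"
  shows "qq n a M \<in> nabla_bar"
proof -
  let ?r = "Sa a (Suc n)" let ?c = "cc n a" let ?D = "real (a 1) * real M"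
  have D: "1 \<le> ?D" using K M by (metis of_nat_1 of_nat_mono mult_mono' mult_1 of_nat_0_le_iff)
  have hc: "?c / ?D \<le> ?c" "0 \<le> ?c / ?D" "0 \<le> ?c" using cc_pos[of n a] D
    by (auto simp: divide_le_eq)
  show ?thesis
  proof (rule nb_intro[where R = "?r + a 1 * M"])
    show "qq n a M (Suc k) \<le> qq n a M k" for k using hc unfolding qq_def by auto
    show "0 \<le> qq n a M k" for k using hc unfolding qq_def by auto
    show "qq n a M k = 0" if "?r + a 1 * M \<le> k" for k using that unfolding qq_def by auto
    have "{..<?r + a 1 * M} = {..<?r} \<union> {?r..<?r + a 1 * M}" by auto
    moreover have "sum (qq n a M) ({..<?r} \<union> {?r..<?r + a 1 * M}) = sum (qq n a M) {..<?r} + sum (qq n a M) {?r..<?r + a 1 * M}"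
      by (rule sum.union_disjoint) auto
    ultimately have "sum (qq n a M) {..<?r + a 1 * M} = sum (qq n a M) {..<?r} + sum (qq n a M) {?r..<?r + a 1 * M}"
      by simp
    also have "sum (qq n a M) {..<?r} = real ?r * ?c" by (simp add: qq_def)
    also have "sum (qq n a M) {?r..<?r + a 1 * M} = real (a 1 * M) * (?c / ?D)" by (simp add: qq_def)
    also have "real (a 1 * M) * (?c / ?D) = ?c" using K M by simp
    also have "real ?r * ?c + ?c = 1" by (simp add: cc_def field_simps)
    finally show "sum (qq n a M) {..<?r + a 1 * M} \<le> 1" by simp
  qed
qed

lemma prod_tendsto:
  fixes f :: "'b \<Rightarrow> nat \<Rightarrow> real"
  shows "(\<forall>k. ((\<lambda>m. f m k) \<longlongrightarrow> l k) Fi) \<Longrightarrow> (f \<longlongrightarrow> l) Fi"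
  using limitin_componentwise[of "\<lambda>_. euclidean" UNIV f l Fi]
  by (simp add: euclidean_product_topology)

lemma qq_tendsto:
  assumes K: "1 \<le> a 1"
  shows "(\<lambda>m. qq n a (Suc m)) \<longlonglongrightarrow> ps n a"
proof (rule prod_tendsto, rule allI)
  fix k
  show "(\<lambda>m. qq n a (Suc m) k) \<longlonglongrightarrow> ps n a k"
  proof (cases "k < Sa a (Suc n)")
    case True thus ?thesis by (simp add: qq_def ps_def)
  next
    case False
    have "(\<lambda>m. (cc n a / real (a 1)) * inverse (real (Suc m))) \<longlonglongrightarrow> (cc n a / real (a 1)) * 0"
      by (intro tendsto_mult tendsto_const LIMSEQ_inverse_real_of_nat)
    hence lim: "(\<lambda>m. (cc n a / real (a 1)) * inverse (real (Suc m))) \<longlonglongrightarrow> 0" by simp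
    have "(\<lambda>m. qq n a (Suc m) k) \<longlonglongrightarrow> 0"
    proof (rule Lim_null_comparison[OF _ lim], rule always_eventually, rule allI)
      fix m
      show "norm (qq n a (Suc m) k) \<le> cc n a / real (a 1) * inverse (real (Suc m))"
        using False cc_pos[of n a] by (auto simp: qq_def field_simps)
    qed
    thus ?thesis using False by (simp add: ps_def)
  qed
qed

lemma card_idx: "1 \<le> n \<Longrightarrow> card (idx n a) = a 1 + Sa a (Suc n)"
proof -
  assume n: "1 \<le> n"
  have "card (idx n a) = (\<Sum>i\<in>{1..n}. a i)" by (simp add: idx_Sigma card_SigmaI)
  also have "{1..n} = insert 1 {2..<Suc n}" using n by auto
  also have "(\<Sum>i\<in>insert 1 {2..<Suc n}. a i) = a 1 + Sa a (Suc n)" by (simp add: Sa_def)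
  finally show ?thesis .
qed

lemma F_ps:
  assumes n: "1 \<le> n" and K: "1 \<le> a 1"
  shows "F n a (ps n a) = 0"
proof -
  let ?I = "idx n a" let ?r = "Sa a (Suc n)"
  have "(\<Prod>x\<in>?I. ps n a (l x) ^ fst x) = 0" if l: "l \<in> labelings n a" for l
  proof -
    have "\<exists>x\<in>?I. ?r \<le> l x"
    proof (rule ccontr)
      assume "\<not> ?thesis"
      hence "l ` ?I \<subseteq> {..<?r}" by auto
      moreover have "inj_on l ?I" using l by (simp add: labelings_def)
      ultimately have "card ?I \<le> card {..<?r}" by (intro card_inj_on_le) auto
      thus False using card_idx[OF n, of a] K by simp
    qed
    then obtain x where x: "x \<in> ?I" "?r \<le> l x" by blast
    have "ps n a (l x) ^ fst x = 0" using x idx_fst[OF x(1)] by (simp add: ps_def)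
    thus ?thesis using x idx_finite by (intro prod_zero) auto
  qed
  hence "infsum (\<lambda>l. \<Prod>x\<in>?I. ps n a (l x) ^ fst x) (labelings n a) = 0"
    by (simp add: infsum_0)
  thus ?thesis by (simp add: F_def prod_case_eq)
qed


lemma prod_if_split:
  assumes "finite A"
  shows "(\<Prod>x\<in>A. if P x then (u::real) else w x) = u ^ card {x\<in>A. P x} * (\<Prod>x\<in>{x\<in>A. \<not> P x}. w x)"
proof -
  have "(\<Prod>x\<in>A. if P x then u else w x) = (\<Prod>x\<in>A. (if P x then u else 1) * (if \<not> P x then w x else 1))"
    by (intro prod.cong) auto
  also have "\<dots> = (\<Prod>x\<in>A. if P x then u else 1) * (\<Prod>x\<in>A. if \<not> P x then w x else 1)"
    by (rule prod.distrib)
  also have "(\<Prod>x\<in>A. if P x then u else 1) = (\<Prod>x\<in>{x\<in>A. P x}. u)"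
    using prod.inter_filter[OF assms, of "\<lambda>_. u" P] by simp
  also have "(\<Prod>x\<in>A. if \<not> P x then w x else 1) = (\<Prod>x\<in>{x\<in>A. \<not> P x}. w x)"
    using prod.inter_filter[OF assms, of w "\<lambda>x. \<not> P x"] by simp
  finally show ?thesis by simp
qed

lemma card_fst1: "1 \<le> n \<Longrightarrow> card {x\<in>idx n a. fst x = 1} = a 1"
proof -
  assume n: "1 \<le> n"
  have "{x\<in>idx n a. fst x = 1} = {1} \<times> {1..a 1}" using n by (auto simp: idx_def)
  thus ?thesis by (simp add: card_cartesian_product)
qed

lemma Ccoef_pos: "0 < Ccoef n a"
  by (auto simp: Ccoef_def intro!: divide_pos_pos prod_pos mult_pos_pos)

lemma F_qq_lower:
  assumes n: "1 \<le> n" and K: "1 \<le> a 1" and M: "1 \<le> M"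
  shows "Ccoef n a * (\<Prod>x\<in>idx n a. if fst x = 1 then cc n a / real (a 1) else cc n a ^ fst x) \<le> F n a (qq n a M)"
proof -
  let ?I = "idx n a" let ?L = "labelings n a" let ?T = "PiE {1..a 1} (\<lambda>_. {..<M})"
  let ?r = "Sa a (Suc n)" let ?c = "cc n a" let ?D = "real (a 1) * real M"
  define g where "g l = (\<Prod>x\<in>?I. qq n a M (l x) ^ fst x)" for l
  define G where "G = (\<Prod>x\<in>?I. if fst x = 1 then ?c / ?D else ?c ^ fst x)"
  have Feq: "F n a (qq n a M) = Ccoef n a * infsum g ?L"
    by (simp add: F_def prod_case_eq g_def[abs_def])
  have gT: "g (labf n a M t) = G" if t: "t \<in> ?T" for t
    unfolding g_def G_def
  proof (rule prod.cong[OF refl])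
    fix x assume x: "x \<in> ?I"
    show "qq n a M (labf n a M t x) ^ fst x = (if fst x = 1 then ?c / ?D else ?c ^ fst x)"
    proof (cases "fst x = 1")
      case True
      have j: "snd x \<in> {1..a 1}" using x True by (auto simp: idx_def)
      hence tj: "t (snd x) < M" using t by auto
      have "(snd x - 1) * M + t (snd x) < (snd x - 1) * M + M" using tj by simp
      also have "\<dots> = snd x * M" using j by (cases "snd x") auto
      also have "\<dots> \<le> a 1 * M" using j by simp
      finally have "labf n a M t x < ?r + a 1 * M" using labf_val1[OF x True] by simp
      moreover have "?r \<le> labf n a M t x" using labf_val1[OF x True] by simp
      ultimately show ?thesis using True by (simp add: qq_def)
    next
      case False
      have "labf n a M t x < ?r" using labf_val2[OF x False] phi_lt_r[OF x idx_fst2[OF x False]] by simp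
      thus ?thesis using False by (simp add: qq_def)
    qed
  qed
  have finT: "finite ?T" by (intro finite_PiE) auto
  have gnn: "0 \<le> g l" for l
    unfolding g_def by (intro prod_nonneg zero_le_power nb_nonneg[OF qq_nb[where a=a and M=M and n=n, OF K M]])
  have le: "sum g (labf n a M ` ?T) \<le> infsum g ?L"
  proof (rule finite_sum_le_infsum)
    show "g summable_on ?L" using lab_summable[OF qq_nb[where a=a and M=M and n=n, OF K M]] by (simp add: g_def[abs_def])
    show "finite (labf n a M ` ?T)" using finT by simp
    show "labf n a M ` ?T \<subseteq> ?L" using labf_in by blast
  qed (rule gnn)
  have s1: "sum g (labf n a M ` ?T) = (\<Sum>t\<in>?T. G)"
    using sum.reindex[OF labf_inj[where n=n and a=a and M=M, OF n], where g=g] gT by simp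
  have cT: "card ?T = M ^ a 1" by (subst card_PiE) auto
  have s2: "(\<Sum>t\<in>?T. G) = real M ^ a 1 * G" unfolding sum_constant cT by simp
  have s3: "real M ^ a 1 * G = (\<Prod>x\<in>?I. if fst x = 1 then ?c / real (a 1) else ?c ^ fst x)"
  proof -
    let ?P2 = "\<Prod>x\<in>{x\<in>?I. \<not> fst x = 1}. ?c ^ fst x"
    have cf: "card {x\<in>?I. fst x = 1} = a 1" by (rule card_fst1[OF n])
    have G2: "G = (?c / ?D) ^ a 1 * ?P2"
      unfolding G_def by (subst prod_if_split[OF idx_finite]) (simp only: cf)
    have T2: "(\<Prod>x\<in>?I. if fst x = 1 then ?c / real (a 1) else ?c ^ fst x) = (?c / real (a 1)) ^ a 1 * ?P2"
      by (subst prod_if_split[OF idx_finite]) (simp only: cf)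
    have e1: "real M * (?c / ?D) = ?c / real (a 1)" using M by simp
    have "real M ^ a 1 * (?c / ?D) ^ a 1 = (real M * (?c / ?D)) ^ a 1" by (rule power_mult_distrib[symmetric])
    also have "\<dots> = (?c / real (a 1)) ^ a 1" by (simp only: e1)
    finally show ?thesis using G2 T2 by (simp add: mult.assoc)
  qed
  have "(\<Prod>x\<in>?I. if fst x = 1 then ?c / real (a 1) else ?c ^ fst x) \<le> infsum g ?L"
    using le unfolding s1 s2 s3 .
  thus ?thesis unfolding Feq by (intro mult_left_mono) (auto intro: less_imp_le Ccoef_pos)
qed

theorem lemma3p1:
  fixes n :: nat and a :: "nat \<Rightarrow> nat"
  assumes "n \<ge> 1" and "(\<Sum>i=1..n. i * a i) = n"
  shows "continuous_on nabla_bar (F n a) \<longleftrightarrow> a 1 = 0"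
proof
  assume c: "continuous_on nabla_bar (F n a)"
  show "a 1 = 0"
  proof (rule ccontr)
    assume "a 1 \<noteq> 0" hence K: "1 \<le> a 1" by simp
    let ?d = "Ccoef n a * (\<Prod>x\<in>idx n a. if fst x = 1 then cc n a / real (a 1) else cc n a ^ fst x)"
    have pos: "0 < ?d" using K cc_pos[of n a]
      by (intro mult_pos_pos Ccoef_pos prod_pos) auto
    have lim: "(\<lambda>m. F n a (qq n a (Suc m))) \<longlonglongrightarrow> F n a (ps n a)"
      by (rule continuous_on_tendsto_compose[OF c qq_tendsto[where a=a and n=n, OF K] ps_nb]) (auto intro!: always_eventually qq_nb[where a=a and n=n, OF K])
    hence lim0: "(\<lambda>m. F n a (qq n a (Suc m))) \<longlonglongrightarrow> 0" using F_ps[where n=n and a=a, OF assms(1) K] by simp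
    have "?d \<le> 0" by (rule LIMSEQ_le_const[OF lim0]) (use F_qq_lower[where n=n and a=a, OF assms(1) K] in auto)
    thus False using pos by simp
  qed
next
  assume "a 1 = 0" thus "continuous_on nabla_bar (F n a)" by (rule cont_part)
qed

end
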